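(* Let $\mathcal{A}\in\mathbb{R}^{I_1\times I_2\times I_3}$, $r_2=\min\{I_1,I_2\}$, and let $\boldsymbol{A}_{(3)}=\boldsymbol{U}^{(3)}\boldsymbol{S}^{(3)}\boldsymbol{V}^{(3)T}$ be an SVD with singular values in descending order, $\boldsymbol{U}^{(3)}\in\mathbb{R}^{I_3\times I_3}$ orthogonal. Let $\widetilde{\mathcal{A}}=\mathcal{A}\times_3\boldsymbol{U}^{(3)T}$ and for $i=1,\dots,I_3$ let $s_{jji}$ ($j=1,\dots,r_2$) denote the singular values of the frontal slice $\widetilde{\mathcal{A}}(:,:,i)$ in descending order (the diagonal entries of the O-SVD core $\mathcal{S}$). Let $\boldsymbol{k}=[k_1;\boldsymbol{k}_2]$ with $1\le k_1\le I_3$ and $\boldsymbol{k}_2=[k_{21},\dots,k_{2k_1}]^T$, $0\le k_{2i}\le r_2$. Define the $\boldsymbol{k}$-term truncated O-SVD $$\mathcal{A}_{\boldsymbol{k}}=(\mathcal{U}_{k_2}*_3\mathcal{S}_{k_2}*_3\mathcal{V}_{k_2})\times_3\boldsymbol{U}^{(3)}_{k_1},$$ where $\boldsymbol{U}^{(3)}_{k_1}=\boldsymbol{U}^{(3)}(:,1:k_1)$ and, for each $i=1,\dots,k_1$, the slice $\mathcal{U}_{k_2}(:,:,i)\mathcal{S}_{k_2}(:,:,i)\mathcal{V}_{k_2}(:,:,i)$ equals the rank-$k_{2i}$ truncated SVD of $\widetilde{\mathcal{A}}(:,:,i)$ (i.e. $\mathcal{U}_{k_2}(:,1:k_{2i},i)$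 holds its $k_{2i}$ leading left singular vectors, $\mathcal{S}_{k_2}(1:k_{2i},1:k_{2i},i)=\mathrm{diag}(s_{11i},\dots,s_{k_{2i}k_{2i}i})$, $\mathcal{V}_{k_2}(1:k_{2i},:,i)$ holds the transposes of its $k_{2i}$ leading right singular vectors, all other entries zero). Then $$\|\mathcal{A}-\mathcal{A}_{\boldsymbol{k}}\|_F^2=\sum_{i=1}^{k_1}\sum_{j=k_{2i}+1}^{r_2}s_{jji}^2+\sum_{i=k_1+1}^{I_3}\sum_{j=1}^{r_2}s_{jji}^2 .$$
   Context: For $\mathcal{A}\in\mathbb{R}^{I_1\times I_2\times I_3}$, $\mathcal{A}(:,:,k)$ is the $k$-th frontal slice; $\boldsymbol{A}_{(3)}\in\mathbb{R}^{I_3\times I_1I_2}$ is the mode-3 unfolding whose columns are the mode-3 fibers. The mode-3 product with $\boldsymbol{M}\in\mathbb{R}^{J\times I_3}$ is $(\mathcal{A}\times_3\boldsymbol{M})_{ijl}=\sum_k a_{ijk}m_{lk}$. The slicewise product $\mathcal{A}*_3\mathcal{B}$ of tensors with compatible frontal slices is defined by $(\mathcal{A}*_3\mathcal{B})(:,:,k)=\mathcal{A}(:,:,k)\mathcal{B}(:,:,k)$. $\|\cdot\|_F$ is the square root of the sum of squares of all entries. *)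

theory Defs
  imports Main "HOL-Analysis.Analysis"
begin

text \<open>Conventions: all indices are 0-based. A real m x n matrix is a function
  nat => nat => real, entry (a,b) with a < m, b < n. A real I1 x I2 x I3 tensor
  is a function nat => nat => nat => real, entry (a,b,c) with a < I1, b < I2, c < I3.
  Entries outside the index range are irrelevant.\<close>

type_synonym mat = "nat \<Rightarrow> nat \<Rightarrow> real"
type_synonym tensor3 = "nat \<Rightarrow> nat \<Rightarrow> nat \<Rightarrow> real"

definition orthogonal_mat :: "nat \<Rightarrow> mat \<Rightarrow> bool" where
  "orthogonal_mat n U \<longleftrightarrow>
     (\<forall>i<n. \<forall>j<n. (\<Sum>k<n. U k i * U k j) = (if i = j then 1 else 0))"

definition is_svd :: "nat \<Rightarrow> nat \<Rightarrow> mat \<Rightarrow> mat \<Rightarrow> mat \<Rightarrow> mat \<Rightarrow> bool" where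
  "is_svd m n M U S V \<longleftrightarrow>
     orthogonal_mat m U \<and> orthogonal_mat n V \<and>
     (\<forall>j<m. \<forall>l<n. j \<noteq> l \<longrightarrow> S j l = 0) \<and>
     (\<forall>j<min m n. 0 \<le> S j j) \<and>
     (\<forall>j l. j \<le> l \<and> l < min m n \<longrightarrow> S l l \<le> S j j) \<and>
     (\<forall>a<m. \<forall>b<n. M a b = (\<Sum>j<m. \<Sum>l<n. U a j * S j l * V b l))"

definition unfold3 :: "nat \<Rightarrow> tensor3 \<Rightarrow> mat" where
  "unfold3 I1 A = (\<lambda>k c. A (c mod I1) (c div I1) k)"

definition mode3_prod :: "nat \<Rightarrow> tensor3 \<Rightarrow> mat \<Rightarrow> tensor3" where
  "mode3_prod n A M = (\<lambda>i j l. \<Sum>k<n. A i j k * M l k)"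

definition slice_prod :: "nat \<Rightarrow> tensor3 \<Rightarrow> tensor3 \<Rightarrow> tensor3" where
  "slice_prod n A B = (\<lambda>i j k. \<Sum>l<n. A i l k * B l j k)"

definition frob_norm :: "nat \<Rightarrow> nat \<Rightarrow> nat \<Rightarrow> tensor3 \<Rightarrow> real" where
  "frob_norm I1 I2 I3 A = sqrt (\<Sum>a<I1. \<Sum>b<I2. \<Sum>c<I3. (A a b c)\<^sup>2)"

end

theory Submission
  imports Defs
begin

lemma quad_orth:
  fixes W :: "nat \<Rightarrow> nat \<Rightarrow> real" and x :: "nat \<Rightarrow> real"
  assumes "\<forall>k<m. \<forall>k'<m. (\<Sum>c<n. W c k * W c k') = (if k = k' then 1 else 0)"
  shows "(\<Sum>c<n. (\<Sum>k<m. x k * W c k)\<^sup>2) = (\<Sum>k<m. (x k)\<^sup>2)"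
proof -
  have "(\<Sum>c<n. (\<Sum>k<m. x k * W c k)\<^sup>2) = (\<Sum>c<n. \<Sum>k<m. \<Sum>k'<m. x k * x k' * (W c k * W c k'))"
    by (simp add: power2_eq_square sum_product algebra_simps)
  also have "\<dots> = (\<Sum>k<m. \<Sum>k'<m. \<Sum>c<n. x k * x k' * (W c k * W c k'))"
    by (simp add: sum.swap[of _ "{..<n}"])
  also have "\<dots> = (\<Sum>k<m. \<Sum>k'<m. x k * x k' * (\<Sum>c<n. W c k * W c k'))"
    by (simp add: sum_distrib_left)
  also have "\<dots> = (\<Sum>k<m. \<Sum>k'<m. x k * x k' * (if k = k' then 1 else 0))"
    using assms by (intro sum.cong refl) auto
  also have "\<dots> = (\<Sum>k<m. (x k)\<^sup>2)"
    by (simp add: if_distrib power2_eq_square cong: if_cong)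
  finally show ?thesis .
qed

lemma orth_right:
  assumes U: "orthogonal_mat n U" and i: "i < n" and j: "j < n"
  shows "(\<Sum>k<n. U i k * U j k) = (if i = j then 1 else 0)"
proof -
  define P where "P i j = (\<Sum>k<n. U i k * U j k)" for i j
  have orth: "\<forall>k<n. \<forall>k'<n. (\<Sum>c<n. U c k * U c k') = (if k = k' then 1 else 0)"
    using U unfolding orthogonal_mat_def by blast
  have h1: "(\<Sum>j<n. (P i j)\<^sup>2) = P i i" for i
  proof -
    have "(\<Sum>j<n. (P i j)\<^sup>2) = (\<Sum>j<n. (\<Sum>k<n. U i k * U j k)\<^sup>2)" by (simp add: P_def)
    also have "\<dots> = (\<Sum>k<n. (U i k)\<^sup>2)" by (rule quad_orth[OF orth])
    finally show ?thesis by (simp add: P_def power2_eq_square)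
  qed
  have h2: "(\<Sum>j<n. ((if i = j then 1 else 0) - P i j)\<^sup>2) = 1 - P i i" if "i < n" for i
  proof -
    have "(\<Sum>j<n. ((if i = j then 1 else 0) - P i j)\<^sup>2)
        = (\<Sum>j<n. (if i = j then 1 - 2 * P i j else 0) + (P i j)\<^sup>2)"
      by (intro sum.cong refl) (auto simp: power2_eq_square algebra_simps)
    also have "\<dots> = 1 - 2 * P i i + P i i" using that h1[of i] by (simp add: sum.distrib)
    finally show ?thesis by simp
  qed
  have h3: "(\<Sum>i<n. P i i) = n"
  proof -
    have "(\<Sum>i<n. P i i) = (\<Sum>k<n. \<Sum>i<n. U i k * U i k)"
      unfolding P_def by (rule sum.swap)
    also have "\<dots> = (\<Sum>k<n. 1)" using orth by (intro sum.cong refl) auto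
    finally show ?thesis by simp
  qed
  have "(\<Sum>i<n. \<Sum>j<n. ((if i = j then 1 else 0) - P i j)\<^sup>2) = (\<Sum>i<n. 1 - P i i)"
    using h2 by (intro sum.cong refl) auto
  also have "\<dots> = 0" using h3 by (simp add: sum_subtractf)
  finally have "(\<Sum>i<n. \<Sum>j<n. ((if i = j then 1 else 0) - P i j)\<^sup>2) = 0" .
  then have "\<forall>i\<in>{..<n}. (\<Sum>j<n. ((if i = j then 1 else 0) - P i j)\<^sup>2) = 0"
    by (subst sum_nonneg_eq_0_iff[symmetric]) (auto intro: sum_nonneg)
  then have "(\<Sum>j<n. ((if i = j then 1 else 0) - P i j)\<^sup>2) = 0" using i by auto
  then have "\<forall>j\<in>{..<n}. ((if i = j then 1 else 0) - P i j)\<^sup>2 = 0"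
    by (subst sum_nonneg_eq_0_iff[symmetric]) auto
  then have "((if i = j then 1 else 0) - P i j)\<^sup>2 = 0" using j by auto
  then show ?thesis by (simp add: P_def)
qed

lemma slice_norm:
  fixes U V :: "nat \<Rightarrow> nat \<Rightarrow> real" and t :: "nat \<Rightarrow> real"
  assumes U: "orthogonal_mat I1 U" and V: "orthogonal_mat I2 V" and r: "r \<le> I1" "r \<le> I2"
  shows "(\<Sum>a<I1. \<Sum>b<I2. (\<Sum>j<r. U a j * t j * V b j)\<^sup>2) = (\<Sum>j<r. (t j)\<^sup>2)"
proof -
  have Vo: "\<forall>k<r. \<forall>k'<r. (\<Sum>c<I2. V c k * V c k') = (if k = k' then 1 else 0)"
    using V r unfolding orthogonal_mat_def by auto
  have "(\<Sum>a<I1. \<Sum>b<I2. (\<Sum>j<r. U a j * t j * V b j)\<^sup>2) = (\<Sum>a<I1. \<Sum>j<r. (U a j * t j)\<^sup>2)"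
    by (intro sum.cong refl quad_orth[OF Vo])
  also have "\<dots> = (\<Sum>j<r. (t j)\<^sup>2 * (\<Sum>a<I1. U a j * U a j))"
    by (simp add: sum.swap[of _ "{..<I1}"] sum_distrib_left power2_eq_square algebra_simps)
  also have "\<dots> = (\<Sum>j<r. (t j)\<^sup>2)"
    using U r unfolding orthogonal_mat_def by (intro sum.cong refl) auto
  finally show ?thesis .
qed

theorem theorem3p3:
  fixes I1 I2 I3 k1 :: nat
    and A :: tensor3
    and U3 :: mat
    and Us Ss Vs :: "nat \<Rightarrow> mat"
    and k2 :: "nat \<Rightarrow> nat"
  assumes svd3: "\<exists>S V. is_svd I3 (I1 * I2) (unfold3 I1 A) U3 S V"
    and slice_svd: "\<forall>i<I3. is_svd I1 I2
        (\<lambda>a b. mode3_prod I3 A (\<lambda>l k. U3 k l) a b i) (Us i) (Ss i) (Vs i)"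
    and k1: "1 \<le> k1" "k1 \<le> I3"
    and k2: "\<forall>i<k1. k2 i \<le> min I1 I2"
  shows
    "let r2 = min I1 I2;
         s = (\<lambda>j i. Ss i j j);
         Uk = (\<lambda>a j i. if j < k2 i then Us i a j else 0);
         Sk = (\<lambda>j l i. if j = l \<and> j < k2 i then Ss i j j else 0);
         Vk = (\<lambda>j b i. if j < k2 i then Vs i b j else 0);
         Ak = mode3_prod k1 (slice_prod r2 (slice_prod r2 Uk Sk) Vk) (\<lambda>l k. U3 l k)
     in (frob_norm I1 I2 I3 (\<lambda>a b c. A a b c - Ak a b c))\<^sup>2
        = (\<Sum>i<k1. \<Sum>j\<in>{k2 i..<r2}. (s j i)\<^sup>2)
          + (\<Sum>i\<in>{k1..<I3}. \<Sum>j<r2. (s j i)\<^sup>2)"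
proof -
  define r2 where "r2 = min I1 I2"
  define At where "At a b k = mode3_prod I3 A (\<lambda>l k. U3 k l) a b k" for a b k
  define t where "t k j = (if k < k1 \<and> j < k2 k then 0 else Ss k j j)" for k j
  define D where "D a b k = (\<Sum>j<r2. Us k a j * t k j * Vs k b j)" for a b k
  define Bt where "Bt a b k = (\<Sum>j<r2. if j < k2 k then Us k a j * Ss k j j * Vs k b j else 0)" for a b k
  define Uk where "Uk = (\<lambda>a j i. if j < k2 i then Us i a j else 0)"
  define Sk where "Sk = (\<lambda>j l i. if j = l \<and> j < k2 i then Ss i j j else 0)"
  define Vk where "Vk = (\<lambda>j b i. if j < k2 i then Vs i b j else 0)"
  define Ak where "Ak = mode3_prod k1 (slice_prod r2 (slice_prod r2 Uk Sk) Vk) (\<lambda>l k. U3 l k)"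
  have U3o: "orthogonal_mat I3 U3" using svd3 unfolding is_svd_def by blast
  have T1: "At a b k = (\<Sum>j<r2. Us k a j * Ss k j j * Vs k b j)"
    if "k < I3" "a < I1" "b < I2" for a b k
  proof -
    have sv: "is_svd I1 I2 (\<lambda>a b. At a b k) (Us k) (Ss k) (Vs k)"
      using slice_svd that unfolding At_def by blast
    then have "At a b k = (\<Sum>j<I1. \<Sum>l<I2. Us k a j * Ss k j l * Vs k b l)"
      using that unfolding is_svd_def by blast
    also have "\<dots> = (\<Sum>j<I1. \<Sum>l<I2. if l = j then Us k a j * Ss k j j * Vs k b j else 0)"
      using sv unfolding is_svd_def by (intro sum.cong refl) auto
    also have "\<dots> = (\<Sum>j<I1. if j < I2 then Us k a j * Ss k j j * Vs k b j else 0)"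
      by (intro sum.cong refl) (simp add: sum.delta'[of "{..<I2}", simplified])
    also have "\<dots> = (\<Sum>j\<in>{..<I1} \<inter> {j. j < I2}. Us k a j * Ss k j j * Vs k b j)"
      by (simp add: sum.inter_restrict)
    also have "{..<I1} \<inter> {j. j < I2} = {..<r2}" by (auto simp: r2_def)
    finally show ?thesis .
  qed
  have T2: "A a b c = (\<Sum>k<I3. At a b k * U3 c k)" if "a < I1" "b < I2" "c < I3" for a b c
  proof -
    have "(\<Sum>k<I3. At a b k * U3 c k) = (\<Sum>k<I3. \<Sum>k'<I3. A a b k' * (U3 k' k * U3 c k))"
      by (simp add: At_def mode3_prod_def sum_distrib_right sum_distrib_left algebra_simps)
    also have "\<dots> = (\<Sum>k'<I3. \<Sum>k<I3. A a b k' * (U3 k' k * U3 c k))"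
      by (rule sum.swap)
    also have "\<dots> = (\<Sum>k'<I3. A a b k' * (\<Sum>k<I3. U3 k' k * U3 c k))"
      by (simp add: sum_distrib_left)
    also have "\<dots> = (\<Sum>k'<I3. A a b k' * (if k' = c then 1 else 0))"
      using orth_right[OF U3o _ that(3)] by (intro sum.cong refl) auto
    also have "\<dots> = A a b c" using that by (simp add: if_distrib cong: if_cong)
    finally show ?thesis by simp
  qed
  have T3: "Ak a b c = (\<Sum>k<k1. Bt a b k * U3 c k)" for a b c
  proof -
    have inner: "(\<Sum>m<r2. Uk a m k * Sk m l k) = (if l < k2 k then Us k a l * Ss k l l else 0)"
      if "l < r2" for l k
    proof -
      have "(\<Sum>m<r2. Uk a m k * Sk m l k) = (\<Sum>m<r2. if m = l then (if l < k2 k then Us k a l * Ss k l l else 0) else 0)"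
        by (intro sum.cong refl) (auto simp: Uk_def Sk_def)
      also have "\<dots> = (if l < k2 k then Us k a l * Ss k l l else 0)" using that
        by (simp add: sum.delta'[of "{..<r2}", simplified])
      finally show ?thesis .
    qed
    have "slice_prod r2 (slice_prod r2 Uk Sk) Vk a b k = Bt a b k" for k
      unfolding slice_prod_def Bt_def
      by (intro sum.cong refl) (simp add: inner Vk_def)
    then show ?thesis unfolding Ak_def mode3_prod_def by simp
  qed
  have T4: "A a b c - Ak a b c = (\<Sum>k<I3. D a b k * U3 c k)" if "a < I1" "b < I2" "c < I3" for a b c
  proof -
    have "(\<Sum>k<k1. Bt a b k * U3 c k) = (\<Sum>k\<in>{..<I3} \<inter> {k. k < k1}. Bt a b k * U3 c k)"
      using k1 by (intro sum.cong) auto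
    also have "\<dots> = (\<Sum>k<I3. if k < k1 then Bt a b k * U3 c k else 0)"
      by (simp add: sum.inter_restrict)
    finally have e: "(\<Sum>k<k1. Bt a b k * U3 c k) = \<dots>" .
    have "A a b c - Ak a b c = (\<Sum>k<I3. At a b k * U3 c k - (if k < k1 then Bt a b k * U3 c k else 0))"
      using T2[OF that] T3 e by (simp add: sum_subtractf)
    also have "\<dots> = (\<Sum>k<I3. D a b k * U3 c k)"
    proof (rule sum.cong[OF refl])
      fix k assume "k \<in> {..<I3}"
      then have "At a b k = (\<Sum>j<r2. Us k a j * Ss k j j * Vs k b j)" using T1 that by simp
      then have "At a b k - (if k < k1 then Bt a b k else 0) = D a b k"
        unfolding D_def Bt_def t_def by (auto simp: sum_subtractf[symmetric] intro!: sum.cong)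
      then show "At a b k * U3 c k - (if k < k1 then Bt a b k * U3 c k else 0) = D a b k * U3 c k"
        by (auto simp: algebra_simps split: if_splits)
    qed
    finally show ?thesis .
  qed
  have U3c: "\<forall>k<I3. \<forall>k'<I3. (\<Sum>c<I3. U3 c k * U3 c k') = (if k = k' then 1 else 0)"
    using U3o unfolding orthogonal_mat_def by blast
  have "(\<Sum>a<I1. \<Sum>b<I2. \<Sum>c<I3. (A a b c - Ak a b c)\<^sup>2)
      = (\<Sum>a<I1. \<Sum>b<I2. \<Sum>c<I3. (\<Sum>k<I3. D a b k * U3 c k)\<^sup>2)"
    using T4 by (intro sum.cong refl) auto
  also have "\<dots> = (\<Sum>a<I1. \<Sum>b<I2. \<Sum>k<I3. (D a b k)\<^sup>2)"
    by (intro sum.cong refl quad_orth[OF U3c])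
  also have "\<dots> = (\<Sum>a<I1. \<Sum>k<I3. \<Sum>b<I2. (D a b k)\<^sup>2)"
    by (intro sum.cong refl sum.swap)
  also have "\<dots> = (\<Sum>k<I3. \<Sum>a<I1. \<Sum>b<I2. (D a b k)\<^sup>2)"
    by (rule sum.swap)
  also have "\<dots> = (\<Sum>k<I3. \<Sum>j<r2. (t k j)\<^sup>2)"
  proof (rule sum.cong[OF refl])
    fix k assume "k \<in> {..<I3}"
    then have sv: "is_svd I1 I2 (\<lambda>a b. mode3_prod I3 A (\<lambda>l k. U3 k l) a b k) (Us k) (Ss k) (Vs k)"
      using slice_svd by blast
    show "(\<Sum>a<I1. \<Sum>b<I2. (D a b k)\<^sup>2) = (\<Sum>j<r2. (t k j)\<^sup>2)"
    proof -
      have o1: "orthogonal_mat I1 (Us k)" "orthogonal_mat I2 (Vs k)" using sv unfolding is_svd_def by auto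
      have r: "r2 \<le> I1" "r2 \<le> I2" by (auto simp: r2_def)
      show ?thesis unfolding D_def using slice_norm[OF o1 r, of "t k"] by simp
    qed
  qed
  finally have F: "(\<Sum>a<I1. \<Sum>b<I2. \<Sum>c<I3. (A a b c - Ak a b c)\<^sup>2) = (\<Sum>k<I3. \<Sum>j<r2. (t k j)\<^sup>2)" .
  have sp: "{..<I3} = {..<k1} \<union> {k1..<I3}" using k1 by auto
  have "(\<Sum>k<I3. \<Sum>j<r2. (t k j)\<^sup>2) = (\<Sum>k<k1. \<Sum>j<r2. (t k j)\<^sup>2) + (\<Sum>k\<in>{k1..<I3}. \<Sum>j<r2. (t k j)\<^sup>2)"
    by (subst sp, rule sum.union_disjoint) auto
  also have "(\<Sum>k<k1. \<Sum>j<r2. (t k j)\<^sup>2) = (\<Sum>k<k1. \<Sum>j\<in>{k2 k..<r2}. (Ss k j j)\<^sup>2)"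
  proof (rule sum.cong[OF refl])
    fix k assume "k \<in> {..<k1}"
    then have kk: "k < k1" "k2 k \<le> r2" using k2 by (auto simp: r2_def)
    have sp2: "{..<r2} = {..<k2 k} \<union> {k2 k..<r2}" using kk by auto
    show "(\<Sum>j<r2. (t k j)\<^sup>2) = (\<Sum>j\<in>{k2 k..<r2}. (Ss k j j)\<^sup>2)"
      by (subst sp2, subst sum.union_disjoint) (auto simp: t_def kk)
  qed
  also have "(\<Sum>k\<in>{k1..<I3}. \<Sum>j<r2. (t k j)\<^sup>2) = (\<Sum>k\<in>{k1..<I3}. \<Sum>j<r2. (Ss k j j)\<^sup>2)"
    by (intro sum.cong refl) (auto simp: t_def)
  finally have G: "(\<Sum>k<I3. \<Sum>j<r2. (t k j)\<^sup>2) = (\<Sum>k<k1. \<Sum>j\<in>{k2 k..<r2}. (Ss k j j)\<^sup>2) + (\<Sum>k\<in>{k1..<I3}. \<Sum>j<r2. (Ss k j j)\<^sup>2)" .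
  have nn: "0 \<le> (\<Sum>a<I1. \<Sum>b<I2. \<Sum>c<I3. (A a b c - Ak a b c)\<^sup>2)"
    by (intro sum_nonneg) auto
  show ?thesis
    unfolding Let_def frob_norm_def
    using F G nn by (simp add: Ak_def Uk_def Sk_def Vk_def r2_def)
qed

end
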